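(* Let $n\ge 0$ and let $\Psi=(\psi_0,\dots,\psi_n)$ with $\psi_k\in(-\tfrac{\pi}{2},\tfrac{\pi}{2})$ for all $k$. For $x\in[-1,1]$ let $\theta\in[0,\pi]$ satisfy $\cos\theta=x$. (a) Define $\boldsymbol\gamma:\mathbb Z\to\mathbb C$ by $\gamma_k:=\tan\psi_k$ for $k=0,\dots,n$ and $\gamma_k=0$ otherwise. Then for all $\theta\in[0,\pi]$, $$\begin{pmatrix}1&0\\0&i\end{pmatrix} H\, U_n(\Psi,\cos\theta)\, H \begin{pmatrix}1&0\\0&-i\end{pmatrix}=\overbrace{\boldsymbol\gamma}(e^{2i\theta})\begin{pmatrix}e^{in\theta}&0\\0&e^{-in\theta}\end{pmatrix}.$$ (b) Define $\boldsymbol\gamma$ by $\gamma_k:=i\tan\psi_k$ for $k=0,\dots,n$ and $\gamma_k=0$ otherwise. Then for all $\theta\in[0,\pi]$, $$H\, U_n(\Psi,\cos\theta)\, H=\overbrace{\boldsymbol\gamma}(e^{2i\theta})\begin{pmatrix}e^{in\theta}&0\\0&e^{-in\theta}\end{pmatrix}.$$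
   Context: $Z=\begin{pmatrix}1&0\\0&-1\end{pmatrix}$, $H=\frac1{\sqrt2}\begin{pmatrix}1&1\\1&-1\end{pmatrix}$. For $x\in[-1,1]$, $W(x):=\begin{pmatrix}x& i\sqrt{1-x^2}\\ i\sqrt{1-x^2}&x\end{pmatrix}$, and $U_n(\Psi,x):=e^{i\psi_0 Z}\prod_{k=1}^n\big(W(x)e^{i\psi_k Z}\big)$ (ordered product, factors with increasing $k$ from left to right). For a compactly supported $\boldsymbol\gamma:\mathbb Z\to\mathbb C$ supported in $[m,n']$, its nonlinear Fourier transform (NLFT) is the matrix-valued function $\overbrace{\boldsymbol\gamma}(z):=\prod_{k=m}^{n'}\frac{1}{\sqrt{1+|\gamma_k|^2}}\begin{pmatrix}1&\gamma_k z^k\\-\overline{\gamma_k}z^{-k}&1\end{pmatrix}$, $z\in\mathbb C\setminus\{0\}$, with the product ordered by increasing $k$ from left to right. *)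

theory Defs
  imports "HOL-Analysis.Analysis"
begin

text \<open>2x2 complex matrices as complex^2^2; index 1 = first row/column, 2 = second.\<close>

definition mat2 :: "complex \<Rightarrow> complex \<Rightarrow> complex \<Rightarrow> complex \<Rightarrow> complex^2^2" where
  "mat2 a b c d = (\<chi> i j. if i = 1 then (if j = 1 then a else b) else (if j = 1 then c else d))"

definition Zmat :: "complex^2^2" where "Zmat = mat2 1 0 0 (-1)"

definition Hmat :: "complex^2^2" where
  "Hmat = mat2 (1 / sqrt 2) (1 / sqrt 2) (1 / sqrt 2) (- 1 / sqrt 2)"

definition Wmat :: "real \<Rightarrow> complex^2^2" where
  "Wmat x = mat2 x (\<i> * sqrt (1 - x\<^sup>2)) (\<i> * sqrt (1 - x\<^sup>2)) x"

text \<open>e^{i psi Z}; since Z = diag(1,-1) this is diag(e^{i psi}, e^{-i psi}).\<close>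
definition expiZ :: "real \<Rightarrow> complex^2^2" where
  "expiZ \<psi> = mat2 (exp (\<i> * \<psi>)) 0 0 (exp (- \<i> * \<psi>))"

fun Uqsp :: "nat \<Rightarrow> (nat \<Rightarrow> real) \<Rightarrow> real \<Rightarrow> complex^2^2" where
  "Uqsp 0 \<Psi> x = expiZ (\<Psi> 0)"
| "Uqsp (Suc n) \<Psi> x = Uqsp n \<Psi> x ** (Wmat x ** expiZ (\<Psi> (Suc n)))"

definition nlft_factor :: "(int \<Rightarrow> complex) \<Rightarrow> int \<Rightarrow> complex \<Rightarrow> complex^2^2" where
  "nlft_factor \<gamma> k z =
     (let s = complex_of_real (1 / sqrt (1 + (cmod (\<gamma> k))\<^sup>2)) in
      mat2 s (s * \<gamma> k * z powi k) (- s * cnj (\<gamma> k) * z powi (- k)) s)"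

definition nlft :: "(int \<Rightarrow> complex) \<Rightarrow> int \<Rightarrow> int \<Rightarrow> complex \<Rightarrow> complex^2^2" where
  "nlft \<gamma> m n' z = foldl (\<lambda>A k. A ** nlft_factor \<gamma> k z) (mat 1) [m..n']"

end

theory Submission
  imports Defs
begin


lemma mat2_mult: "mat2 a b c d ** mat2 e f g h = mat2 (a*e+b*g) (a*f+b*h) (c*e+d*g) (c*f+d*h)"
  by (simp add: vec_eq_iff matrix_matrix_mult_def mat2_def sum_2 forall_2)

lemma mat2_eq: "mat2 a b c d = mat2 a' b' c' d' \<longleftrightarrow> a = a' \<and> b = b' \<and> c = c' \<and> d = d'"
  by (auto simp: vec_eq_iff mat2_def forall_2)

lemma mat1_mat2: "mat 1 = mat2 1 0 0 1"
  by (simp add: vec_eq_iff mat_def mat2_def forall_2)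

lemma cos_tan_s:
  assumes "- (pi/2) < p" "p < pi/2"
  shows "1 / sqrt (1 + (cmod (complex_of_real (tan p)))\<^sup>2) = cos p"
    "1 / sqrt (1 + (cmod (\<i> * complex_of_real (tan p)))\<^sup>2) = cos p"
proof -
  have c: "cos p > 0" using assms cos_gt_zero_pi by auto
  have "1 + (tan p)\<^sup>2 = 1 / (cos p)\<^sup>2" using c
    by (simp add: tan_def field_simps sin_squared_eq)
  hence "sqrt (1 + (tan p)\<^sup>2) = 1 / cos p" using c by (simp add: real_sqrt_divide)
  thus "1 / sqrt (1 + (cmod (complex_of_real (tan p)))\<^sup>2) = cos p"
     "1 / sqrt (1 + (cmod (\<i> * complex_of_real (tan p)))\<^sup>2) = cos p"
    by (simp_all add: norm_mult)
qed



lemma nlft_Suc: "nlft g 0 (int (Suc n)) z = nlft g 0 (int n) z ** nlft_factor g (int (Suc n)) z"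
proof -
  have "[0..int (Suc n)] = [0..int n] @ [int (Suc n)]"
    using upto_rec2[of 0 "int (Suc n)"] by simp
  thus ?thesis by (simp add: nlft_def)
qed

lemma nlft_0: "nlft g 0 0 z = nlft_factor g 0 z"
  by (simp add: nlft_def)

lemma nlft_cong: "(\<And>k. 0 \<le> k \<Longrightarrow> k \<le> int n \<Longrightarrow> f k = g k) \<Longrightarrow> nlft f 0 (int n) z = nlft g 0 (int n) z"
  unfolding nlft_def by (rule foldl_cong) (auto simp: nlft_factor_def)

lemma gen:
  assumes RL: "R ** L = mat 1"
    and W: "L ** Wmat x ** R = D 1"
    and D0: "D 0 = mat 1"
    and Ds: "\<And>k. D k ** D 1 = D (Suc k)"
    and F: "\<And>k. k \<le> n \<Longrightarrow> D k ** (L ** expiZ (\<Psi> k) ** R) = nlft_factor g (int k) z ** D k"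
  shows "L ** Uqsp n \<Psi> x ** R = nlft g 0 (int n) z ** D n"
  using F
proof (induction n)
  case 0
  then show ?case using F[of 0] by (simp add: nlft_0 D0)
next
  case (Suc n)
  have "L ** Uqsp (Suc n) \<Psi> x ** R = L ** Uqsp n \<Psi> x ** (R ** L) ** Wmat x ** (R ** L) ** expiZ (\<Psi> (Suc n)) ** R"
    by (simp add: RL matrix_mul_assoc del: Uqsp.simps)(simp add: matrix_mul_assoc)
  also have "\<dots> = (L ** Uqsp n \<Psi> x ** R) ** (L ** Wmat x ** R) ** (L ** expiZ (\<Psi> (Suc n)) ** R)"
    by (simp add: matrix_mul_assoc)
  also have "\<dots> = nlft g 0 (int n) z ** (D (Suc n) ** (L ** expiZ (\<Psi> (Suc n)) ** R))"
    using Suc by (simp only: W matrix_mul_assoc Ds[of n, symmetric] Suc.IH le_SucI)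
  also have "\<dots> = nlft g 0 (int (Suc n)) z ** D (Suc n)"
    using Suc.prems[of "Suc n"] by (simp only: nlft_Suc matrix_mul_assoc order_refl)
  finally show ?case .
qed



lemma HH: "Hmat ** Hmat = mat 1"
  by (simp add: Hmat_def mat2_mult mat1_mat2 mat2_eq power2_eq_square[symmetric] power_divide flip: of_real_power)

lemma expk: "exp (\<i> * of_nat k * of_real t) * exp (- \<i> * of_nat k * of_real t) = 1"
  by (simp add: exp_minus[symmetric] exp_add[symmetric])

lemma zpow: "exp (2 * \<i> * of_real t) ^ k = exp (\<i> * of_nat k * of_real t) * exp (\<i> * of_nat k * of_real t)"
  by (simp add: exp_of_nat_mult[symmetric] exp_add[symmetric] algebra_simps)

lemma zpowm: "exp (2 * \<i> * of_real t) ^ k * exp (- \<i> * of_nat k * of_real t) = exp (\<i> * of_nat k * of_real t)"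
  by (metis zpow expk mult.assoc mult_1_right)

lemma tancos: "cos p \<noteq> 0 \<Longrightarrow> complex_of_real (cos p) * complex_of_real (tan p) = complex_of_real (sin p)"
  by (simp only: of_real_mult[symmetric]) (simp add: tan_def)

lemma DD: "mat2 (exp (\<i> * of_nat k * of_real t)) 0 0 (exp (- \<i> * of_nat k * of_real t)) **
   mat2 (exp (\<i> * of_nat 1 * of_real t)) 0 0 (exp (- \<i> * of_nat 1 * of_real t))
  = mat2 (exp (\<i> * of_nat (Suc k) * of_real t)) 0 0 (exp (- \<i> * of_nat (Suc k) * of_real t))"
  by (simp add: mat2_mult mat2_eq exp_add[symmetric] algebra_simps)

lemma D0: "mat2 (exp (\<i> * of_nat 0 * of_real t)) 0 0 (exp (- \<i> * of_nat 0 * of_real t)) = mat 1"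
  by (simp add: mat1_mat2)

lemma sqrt_sin: "0 \<le> t \<Longrightarrow> t \<le> pi \<Longrightarrow> sqrt (1 - (cos t)\<^sup>2) = sin t"
  by (simp add: sin_squared_eq[symmetric] sin_ge_zero)

lemma eit: "exp (\<i> * of_real t) = complex_of_real (cos t) + \<i> * complex_of_real (sin t)"
  by (simp add: cis_conv_exp[symmetric] complex_eq_iff)

lemma emit: "exp (- (\<i> * of_real t)) = complex_of_real (cos t) - \<i> * complex_of_real (sin t)"
  using eit[of "-t"] by simp

lemma r2: "complex_of_real (sqrt 2) * complex_of_real (sqrt 2) = 2"
  "(complex_of_real (sqrt 2))\<^sup>2 = 2"
  by (simp_all flip: of_real_mult of_real_power)

lemma HWH: "0 \<le> t \<Longrightarrow> t \<le> pi \<Longrightarrow> Hmat ** Wmat (cos t) ** Hmat =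
   mat2 (exp (\<i> * of_nat 1 * of_real t)) 0 0 (exp (- \<i> * of_nat 1 * of_real t))"
  apply (simp add: Hmat_def Wmat_def mat2_mult mat2_eq sqrt_sin eit emit)
  apply (simp add: field_simps r2)
  done



definition Dm :: "nat \<Rightarrow> real \<Rightarrow> complex^2^2" where
  "Dm k t = mat2 (exp (\<i> * of_nat k * of_real t)) 0 0 (exp (- \<i> * of_nat k * of_real t))"

lemma zpow2: "exp (2 * \<i> * of_real t) ^ k = exp (\<i> * of_nat k * of_real t) * exp (\<i> * of_nat k * of_real t)"
  by (rule zpow)

lemma zinv: "inverse (exp (2 * \<i> * of_real t) ^ k) = exp (- \<i> * of_nat k * of_real t) * exp (- \<i> * of_nat k * of_real t)"
  by (simp add: zpow exp_minus[symmetric] flip: exp_minus)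

lemma factor_eq:
  assumes "cos p > 0" "1 / sqrt (1 + (cmod (g (int k)))\<^sup>2) = cos p"
  shows "nlft_factor g (int k) z = mat2 (complex_of_real (cos p)) (complex_of_real (cos p) * g (int k) * z ^ k) (- complex_of_real (cos p) * cnj (g (int k)) * inverse (z ^ k)) (complex_of_real (cos p))"
  using assms by (simp add: nlft_factor_def Let_def power_int_minus)

lemma Fb:
  assumes "- (pi/2) < p" "p < pi/2" "g (int k) = \<i> * complex_of_real (tan p)"
  shows "Dm k t ** mat2 (cos p) (\<i> * sin p) (\<i> * sin p) (cos p) = nlft_factor g (int k) (exp (2 * \<i> * of_real t)) ** Dm k t"
proof -
  have c: "cos p > 0" using assms cos_gt_zero_pi by auto
  have f: "nlft_factor g (int k) (exp (2 * \<i> * of_real t)) = mat2 (complex_of_real (cos p)) (complex_of_real (cos p) * g (int k) * exp (2 * \<i> * of_real t) ^ k) (- complex_of_real (cos p) * cnj (g (int k)) * inverse (exp (2 * \<i> * of_real t) ^ k)) (complex_of_real (cos p))"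
    by (rule factor_eq[OF c]) (use cos_tan_s[OF assms(1,2)] assms(3) in simp)
  have tc: "complex_of_real (cos p) * complex_of_real (tan p) = complex_of_real (sin p)"
    using tancos c by simp
  show ?thesis unfolding f Dm_def
    apply (simp add: mat2_mult mat2_eq assms(3) zpow2 zinv)
    apply (simp add: algebra_simps)
    apply (simp add: exp_minus flip: mult.assoc)
    apply (simp add: tc)
    done
qed



lemma Fa:
  assumes "- (pi/2) < p" "p < pi/2" "g (int k) = complex_of_real (tan p)"
  shows "Dm k t ** mat2 (cos p) (sin p) (- sin p) (cos p) = nlft_factor g (int k) (exp (2 * \<i> * of_real t)) ** Dm k t"
proof -
  have c: "cos p > 0" using assms cos_gt_zero_pi by auto
  have f: "nlft_factor g (int k) (exp (2 * \<i> * of_real t)) = mat2 (complex_of_real (cos p)) (complex_of_real (cos p) * g (int k) * exp (2 * \<i> * of_real t) ^ k) (- complex_of_real (cos p) * cnj (g (int k)) * inverse (exp (2 * \<i> * of_real t) ^ k)) (complex_of_real (cos p))"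
    by (rule factor_eq[OF c]) (use cos_tan_s[OF assms(1,2)] assms(3) in simp)
  have tc: "complex_of_real (cos p) * complex_of_real (tan p) = complex_of_real (sin p)"
    using tancos c by simp
  show ?thesis unfolding f Dm_def
    apply (simp add: mat2_mult mat2_eq assms(3) zpow2 zinv)
    apply (simp add: algebra_simps)
    apply (simp add: exp_minus flip: mult.assoc)
    apply (simp add: tc)
    done
qed

lemma iii: "- (\<i> * x * \<i>) = (x::complex)"
  by (metis mult.commute mult.assoc complex_i_mult_minus minus_minus)

lemma HEH: "Hmat ** expiZ p ** Hmat = mat2 (cos p) (\<i> * sin p) (\<i> * sin p) (cos p)"
  apply (simp add: Hmat_def expiZ_def mat2_mult mat2_eq eit emit[simplified] flip: of_real_minus)
  apply (simp add: field_simps r2)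
  done

lemma SHEHS: "(mat2 1 0 0 \<i> ** Hmat) ** expiZ p ** (Hmat ** mat2 1 0 0 (- \<i>)) = mat2 (cos p) (sin p) (- sin p) (cos p)"
proof -
  have "(mat2 1 0 0 \<i> ** Hmat) ** expiZ p ** (Hmat ** mat2 1 0 0 (- \<i>)) = mat2 1 0 0 \<i> ** (Hmat ** expiZ p ** Hmat) ** mat2 1 0 0 (- \<i>)"
    by (simp add: matrix_mul_assoc)
  thus ?thesis by (simp add: HEH mat2_mult mat2_eq iii)
qed

lemma SHWHS: "0 \<le> t \<Longrightarrow> t \<le> pi \<Longrightarrow> (mat2 1 0 0 \<i> ** Hmat) ** Wmat (cos t) ** (Hmat ** mat2 1 0 0 (- \<i>)) = Dm 1 t"
proof -
  assume a: "0 \<le> t" "t \<le> pi"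
  have "(mat2 1 0 0 \<i> ** Hmat) ** Wmat (cos t) ** (Hmat ** mat2 1 0 0 (- \<i>)) = mat2 1 0 0 \<i> ** (Hmat ** Wmat (cos t) ** Hmat) ** mat2 1 0 0 (- \<i>)"
    by (simp add: matrix_mul_assoc)
  thus ?thesis using HWH[OF a] by (simp add: mat2_mult mat2_eq Dm_def iii)
qed

lemma RL: "(Hmat ** mat2 1 0 0 (- \<i>)) ** (mat2 1 0 0 \<i> ** Hmat) = mat 1"
proof -
  have "mat2 1 0 0 (- \<i>) ** mat2 1 0 0 \<i> = mat 1" by (simp add: mat2_mult mat1_mat2)
  thus ?thesis by (simp add: matrix_mul_assoc HH flip: matrix_mul_assoc[of Hmat])
qed


theorem lemma3p1:
  fixes n :: nat and \<Psi> :: "nat \<Rightarrow> real" and \<theta> :: real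
  assumes psi: "\<forall>k\<le>n. - (pi / 2) < \<Psi> k \<and> \<Psi> k < pi / 2"
    and th: "0 \<le> \<theta>" "\<theta> \<le> pi"
  shows "(mat2 1 0 0 \<i> ** Hmat ** Uqsp n \<Psi> (cos \<theta>) ** Hmat ** mat2 1 0 0 (- \<i>)
           = nlft (\<lambda>k. if 0 \<le> k \<and> k \<le> int n then complex_of_real (tan (\<Psi> (nat k))) else 0)
                  0 (int n) (exp (2 * \<i> * \<theta>))
             ** mat2 (exp (\<i> * n * \<theta>)) 0 0 (exp (- \<i> * n * \<theta>)))
       \<and> (Hmat ** Uqsp n \<Psi> (cos \<theta>) ** Hmat
           = nlft (\<lambda>k. if 0 \<le> k \<and> k \<le> int n then \<i> * complex_of_real (tan (\<Psi> (nat k))) else 0)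
                  0 (int n) (exp (2 * \<i> * \<theta>))
             ** mat2 (exp (\<i> * n * \<theta>)) 0 0 (exp (- \<i> * n * \<theta>)))"
proof
  let ?z = "exp (2 * \<i> * complex_of_real \<theta>)"
  let ?ga = "\<lambda>k. complex_of_real (tan (\<Psi> (nat k)))"
  let ?gb = "\<lambda>k. \<i> * complex_of_real (tan (\<Psi> (nat k)))"
  have D0': "Dm 0 \<theta> = mat 1" using D0 by (simp add: Dm_def)
  have Ds': "\<And>k. Dm k \<theta> ** Dm 1 \<theta> = Dm (Suc k) \<theta>" using DD by (simp add: Dm_def)
  have ca: "nlft (\<lambda>k. if 0 \<le> k \<and> k \<le> int n then complex_of_real (tan (\<Psi> (nat k))) else 0) 0 (int n) ?z
      = nlft ?ga 0 (int n) ?z" by (rule nlft_cong) simp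
  have cb: "nlft (\<lambda>k. if 0 \<le> k \<and> k \<le> int n then \<i> * complex_of_real (tan (\<Psi> (nat k))) else 0) 0 (int n) ?z
      = nlft ?gb 0 (int n) ?z" by (rule nlft_cong) simp
  have A: "(mat2 1 0 0 \<i> ** Hmat) ** Uqsp n \<Psi> (cos \<theta>) ** (Hmat ** mat2 1 0 0 (- \<i>)) = nlft ?ga 0 (int n) ?z ** Dm n \<theta>"
  proof (rule gen[where D="\<lambda>k. Dm k \<theta>"])
    show "(Hmat ** mat2 1 0 0 (- \<i>)) ** (mat2 1 0 0 \<i> ** Hmat) = mat 1" by (rule RL)
    show "(mat2 1 0 0 \<i> ** Hmat) ** Wmat (cos \<theta>) ** (Hmat ** mat2 1 0 0 (- \<i>)) = Dm 1 \<theta>"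
      by (rule SHWHS[OF th])
    show "Dm 0 \<theta> = mat 1" by (rule D0')
    show "\<And>k. Dm k \<theta> ** Dm 1 \<theta> = Dm (Suc k) \<theta>" by (rule Ds')
    fix k assume "k \<le> n"
    with psi have p: "- (pi / 2) < \<Psi> k" "\<Psi> k < pi / 2" by auto
    show "Dm k \<theta> ** ((mat2 1 0 0 \<i> ** Hmat) ** expiZ (\<Psi> k) ** (Hmat ** mat2 1 0 0 (- \<i>))) = nlft_factor ?ga (int k) ?z ** Dm k \<theta>"
      unfolding SHEHS by (rule Fa[OF p]) simp
  qed
  have B: "Hmat ** Uqsp n \<Psi> (cos \<theta>) ** Hmat = nlft ?gb 0 (int n) ?z ** Dm n \<theta>"
  proof (rule gen[where D="\<lambda>k. Dm k \<theta>"])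
    show "Hmat ** Hmat = mat 1" by (rule HH)
    show "Hmat ** Wmat (cos \<theta>) ** Hmat = Dm 1 \<theta>"
      using HWH[OF th] by (simp add: Dm_def)
    show "Dm 0 \<theta> = mat 1" by (rule D0')
    show "\<And>k. Dm k \<theta> ** Dm 1 \<theta> = Dm (Suc k) \<theta>" by (rule Ds')
    fix k assume "k \<le> n"
    with psi have p: "- (pi / 2) < \<Psi> k" "\<Psi> k < pi / 2" by auto
    show "Dm k \<theta> ** (Hmat ** expiZ (\<Psi> k) ** Hmat) = nlft_factor ?gb (int k) ?z ** Dm k \<theta>"
      unfolding HEH by (rule Fb[OF p]) simp
  qed
  have A': "mat2 1 0 0 \<i> ** Hmat ** Uqsp n \<Psi> (cos \<theta>) ** Hmat ** mat2 1 0 0 (- \<i>) = (mat2 1 0 0 \<i> ** Hmat) ** Uqsp n \<Psi> (cos \<theta>) ** (Hmat ** mat2 1 0 0 (- \<i>))"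
    by (simp only: matrix_mul_assoc)
  show "mat2 1 0 0 \<i> ** Hmat ** Uqsp n \<Psi> (cos \<theta>) ** Hmat ** mat2 1 0 0 (- \<i>)
           = nlft (\<lambda>k. if 0 \<le> k \<and> k \<le> int n then complex_of_real (tan (\<Psi> (nat k))) else 0)
                  0 (int n) (exp (2 * \<i> * \<theta>))
             ** mat2 (exp (\<i> * n * \<theta>)) 0 0 (exp (- \<i> * n * \<theta>))"
    using A A' ca by (simp add: Dm_def)
  show "Hmat ** Uqsp n \<Psi> (cos \<theta>) ** Hmat
           = nlft (\<lambda>k. if 0 \<le> k \<and> k \<le> int n then \<i> * complex_of_real (tan (\<Psi> (nat k))) else 0)
                  0 (int n) (exp (2 * \<i> * \<theta>))
             ** mat2 (exp (\<i> * n * \<theta>)) 0 0 (exp (- \<i> * n * \<theta>))"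
    using B cb by (simp add: Dm_def)
qed

end
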